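(* Let $K$ be a field containing $\mathbb{F}_q$ and let $B\in\mathrm{GL}_n(K)$, and set $B^*=(B^{-1})^T$. Then the systems $BX^{(q)}=X$ and $B^*X^{(q)}=X$ have the same splitting field over $K$.
   Context: $X^{(q)}$ denotes entrywise $q$-th power. The splitting field over $K$ of the system $CX^{(q)}=X$ (for $C\in\mathrm{GL}_n(K)$) is the subfield of a separable closure $K_{\mathrm{sep}}$ generated over $K$ by the coordinates of all solutions $X\in K_{\mathrm{sep}}^n$. *)

theory Defs
  imports "HOL-Analysis.Analysis" "HOL-Computational_Algebra.Polynomial"
begin

definition is_subfield :: "'a::field set \<Rightarrow> bool" where
  "is_subfield F \<longleftrightarrow> 0 \<in> F \<and> 1 \<in> F \<and>
     (\<forall>x\<in>F. \<forall>y\<in>F. x + y \<in> F \<and> x - y \<in> F \<and> x * y \<in> F) \<and>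
     (\<forall>x\<in>F. inverse x \<in> F)"

definition gen_field :: "'a::field set \<Rightarrow> 'a set" where
  "gen_field S = \<Inter>{F. is_subfield F \<and> S \<subseteq> F}"

definition separable_poly :: "'a::field poly \<Rightarrow> bool" where
  "separable_poly p \<longleftrightarrow> coprime p (pderiv p)"

text \<open>The whole ambient field (UNIV of type 'a) is a separable closure of K:
  it is separably closed, and every element is algebraic and separable over K.\<close>
definition is_separable_closure_of :: "'a::field set \<Rightarrow> bool" where
  "is_separable_closure_of K \<longleftrightarrow> is_subfield K \<and>
     (\<forall>p::'a poly. degree p > 0 \<and> separable_poly p \<longrightarrow> (\<exists>x. poly p x = 0)) \<and>
     (\<forall>x::'a. \<exists>p. p \<noteq> 0 \<and> (\<forall>i. coeff p i \<in> K) \<and> separable_poly p \<and> poly p x = 0)"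

definition qpow :: "nat \<Rightarrow> 'a::field ^ 'n \<Rightarrow> 'a ^ 'n" where
  "qpow q X = (\<chi> i. (X $ i) ^ q)"

definition splitting_field ::
  "'a::field set \<Rightarrow> nat \<Rightarrow> 'a ^ 'n ^ 'n \<Rightarrow> 'a set" where
  "splitting_field K q C =
     gen_field (K \<union> {X $ i | X i. C *v qpow q X = X})"

end

theory Submission imports Defs begin

lemma subfield_sum: assumes "is_subfield G" "finite I" "\<forall>i\<in>I. f i \<in> G" shows "sum f I \<in> G"
  using assms(2,3) by (induction I rule: finite_induct) (use assms(1) in \<open>auto simp: is_subfield_def\<close>)

lemma subfield_prod: assumes "is_subfield G" "finite I" "\<forall>i\<in>I. f i \<in> G" shows "prod f I \<in> G"
  using assms(2,3) by (induction I rule: finite_induct) (use assms(1) in \<open>auto simp: is_subfield_def\<close>)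

lemma subfield_div: "is_subfield G \<Longrightarrow> x \<in> G \<Longrightarrow> y \<in> G \<Longrightarrow> x / y \<in> G"
  by (simp add: is_subfield_def divide_inverse)

lemma subfield_det: 
  fixes A :: "'a::field^'n^'n"
  assumes "is_subfield G" "\<forall>i j. A$i$j \<in> G" shows "det A \<in> G"
proof -
  have s: "of_int (sign p) \<in> G" for p :: "'n \<Rightarrow> 'n"
  proof -
    have "(0::'a) - 1 \<in> G" using assms(1) unfolding is_subfield_def by blast
    then have "(-1::'a) \<in> G" by simp
    then show ?thesis using assms(1) by (auto simp: sign_def is_subfield_def)
  qed
  show ?thesis unfolding det_def
    apply (rule subfield_sum[OF assms(1)])
     apply (simp add: finite_permutations)
  proof
    fix p :: "'n \<Rightarrow> 'n"
    have "(\<Prod>i\<in>UNIV. A $ i $ p i) \<in> G" using assms by (intro subfield_prod) auto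
    then show "of_int (sign p) * (\<Prod>i\<in>UNIV. A $ i $ p i) \<in> G"
      using s[of p] assms(1) by (simp add: is_subfield_def)
  qed
qed

lemma gen_field_subfield: "is_subfield (gen_field S)"
  unfolding gen_field_def is_subfield_def by auto

lemma gen_field_sup: "S \<subseteq> gen_field S"
  unfolding gen_field_def by auto

lemma gen_field_min: "is_subfield F \<Longrightarrow> S \<subseteq> F \<Longrightarrow> gen_field S \<subseteq> F"
  unfolding gen_field_def by auto

locale ffield =
  fixes F :: "'a::field set" and q :: nat
  assumes sub: "is_subfield F" and fin: "finite F" and cardF: "card F = q"
begin

lemma q_ge2: "q \<ge> 2"
proof -
  have "{0,1} \<subseteq> F" using sub by (simp add: is_subfield_def)
  then have "card {0::'a,1} \<le> q" using card_mono[OF fin] cardF by blast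
  then show ?thesis by simp
qed

lemma of_nat_q: "of_nat q = (0::'a)"
proof -
  have b: "bij_betw (\<lambda>x. x + 1) F F"
    unfolding bij_betw_def inj_on_def
  proof (intro conjI ballI impI)
    show "(\<lambda>x. x + 1) ` F = F"
    proof
      show "(\<lambda>x. x + 1) ` F \<subseteq> F" using sub by (auto simp: is_subfield_def)
      show "F \<subseteq> (\<lambda>x. x + 1) ` F"
      proof
        fix x assume "x \<in> F"
        then have "x - 1 \<in> F" using sub by (simp add: is_subfield_def)
        then show "x \<in> (\<lambda>x. x + 1) ` F" by (intro image_eqI[of _ _ "x - 1"]) auto
      qed
    qed
  qed auto
  have "sum (\<lambda>x. x + 1) F = sum (\<lambda>x. x) F"
    using sum.reindex_bij_betw[OF b, of "\<lambda>x. x"] by simp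
  then show ?thesis by (simp add: sum.distrib cardF)
qed

lemma pow_q_F: "x \<in> F \<Longrightarrow> x ^ q = x"
proof (cases "x = 0")
  case True then show ?thesis using q_ge2 by simp
next
  case False
  assume xF: "x \<in> F"
  let ?G = "F - {0}"
  have b: "bij_betw (\<lambda>y. x * y) ?G ?G"
    unfolding bij_betw_def inj_on_def
  proof (intro conjI ballI impI)
    show "(\<lambda>y. x * y) ` ?G = ?G"
    proof
      show "(\<lambda>y. x * y) ` ?G \<subseteq> ?G" using sub xF False by (auto simp: is_subfield_def)
      show "?G \<subseteq> (\<lambda>y. x * y) ` ?G"
      proof
        fix y assume y: "y \<in> ?G"
        then have "inverse x * y \<in> ?G" using sub xF False by (auto simp: is_subfield_def)
        then show "y \<in> (\<lambda>y. x * y) ` ?G" using False by (intro image_eqI[of _ _ "inverse x * y"]) auto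
      qed
    qed
  qed (use False in auto)
  have "prod (\<lambda>y. x * y) ?G = prod (\<lambda>y. y) ?G"
    using prod.reindex_bij_betw[OF b, of "\<lambda>y. y"] by simp
  moreover have "card ?G = q - 1" using cardF fin sub by (simp add: is_subfield_def)
  ultimately have "x ^ (q - 1) * prod (\<lambda>y. y) ?G = prod (\<lambda>y. y) ?G"
    by (simp add: prod.distrib)
  moreover have "prod (\<lambda>y. y) ?G \<noteq> 0" using fin by simp
  ultimately have "x ^ (q - 1) = 1" by simp
  then have "x ^ (q - 1) * x = x" by simp
  moreover obtain m where "q = Suc m" using q_ge2 by (cases q) auto
  ultimately show ?thesis by (simp add: mult.commute)
qed

lemma roots_in_F: 
  assumes "(x::'a) ^ q = x" shows "x \<in> F"
proof (rule ccontr)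
  assume nx: "x \<notin> F"
  let ?p = "monom (1::'a) q + [:0,-1:]"
  have dp: "degree ?p = q" using q_ge2
    by (subst degree_add_eq_left) (auto simp: degree_monom_eq)
  then have p0: "?p \<noteq> 0" using q_ge2 by auto
  have "insert x F \<subseteq> {y. poly ?p y = 0}"
    using assms pow_q_F by (auto simp: poly_monom)
  then have "card (insert x F) \<le> card {y. poly ?p y = 0}"
    using poly_roots_finite[OF p0] by (intro card_mono) auto
  also have "\<dots> \<le> q" using card_poly_roots_bound[OF p0] dp by simp
  finally show False using nx fin cardF by simp
qed

end

lemma mv_smult: "(A::'a::field^'n^'m) *v (c *s x) = c *s (A *v x)"
  by (simp add: vec_eq_iff matrix_vector_mult_def sum_distrib_left algebra_simps)

lemma mv_sum: "finite I \<Longrightarrow> (A::'a::field^'n^'m) *v (sum f I) = sum (\<lambda>i. A *v f i) I"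
  by (induction I rule: finite_induct) (auto simp: matrix_vector_right_distrib)

definition qmat :: "nat \<Rightarrow> 'a::field^'n^'m \<Rightarrow> 'a^'n^'m" where
  "qmat q A = (\<chi> i j. (A$i$j)^q)"

context ffield begin

lemma frob_add: "((a::'a) + b) ^ q = a ^ q + b ^ q"
proof -
  let ?r = "[:1,1:] ^ q - monom (1::'a) q - 1"
  have q1: "q \<ge> 1" using q_ge2 by simp
  have dpow: "degree ([:1,1:] ^ q :: 'a poly) = q"
    by (simp add: degree_power_eq)
  have lpow: "coeff ([:1,1:] ^ q :: 'a poly) q = 1"
    using lead_coeff_power[of "[:1,1::'a:]" q] dpow by simp
  have "degree ?r \<le> q - 1"
  proof (rule degree_le, intro allI impI)
    fix i assume i: "q - 1 < i"
    show "coeff ?r i = 0"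
    proof (cases "i = q")
      case True then show ?thesis using lpow q1 by simp
    next
      case False
      then have "i > q" using i by simp
      then show ?thesis using dpow q1 by (simp add: coeff_eq_0)
    qed
  qed
  have roots: "\<forall>t\<in>F. poly ?r t = 0"
  proof
    fix t assume t: "t \<in> F"
    then have "t + 1 \<in> F" using sub by (simp add: is_subfield_def)
    then show "poly ?r t = 0" using t pow_q_F by (simp add: poly_monom algebra_simps)
  qed
  have r0: "?r = 0"
  proof (rule ccontr)
    assume nz: "?r \<noteq> 0"
    have "F \<subseteq> {t. poly ?r t = 0}" using roots by auto
    then have "card F \<le> card {t. poly ?r t = 0}"
      using poly_roots_finite[OF nz] by (intro card_mono) auto
    also have "\<dots> \<le> degree ?r" using card_poly_roots_bound[OF nz] .
    finally show False using \<open>degree ?r \<le> q - 1\<close> cardF q1 by simp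
  qed
  have key: "(t + 1) ^ q = t ^ q + 1" for t :: 'a
  proof -
    have "poly ?r t = 0" using r0 by simp
    then show ?thesis by (simp add: poly_monom algebra_simps)
  qed
  show ?thesis
  proof (cases "b = 0")
    case True then show ?thesis using q1 by (simp add: power_0_left)
  next
    case False
    have "a + b = b * (a / b + 1)" using False by (simp add: field_simps)
    then have "(a + b) ^ q = (b * (a / b + 1)) ^ q" by simp
    also have "\<dots> = b ^ q * ((a/b) ^ q + 1)" by (simp add: power_mult_distrib key)
    also have "\<dots> = a ^ q + b ^ q" using False by (simp add: field_simps power_divide)
    finally show ?thesis .
  qed
qed

lemma frob_sum: "finite I \<Longrightarrow> (sum f I :: 'a) ^ q = sum (\<lambda>i. f i ^ q) I"
  by (induction I rule: finite_induct) (use q_ge2 in \<open>auto simp: frob_add power_0_left\<close>)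

lemma frob_diff: "((a::'a) - b) ^ q = a ^ q - b ^ q"
  using frob_add[of "a - b" b] by simp

lemma frob_inj: "(a::'a) ^ q = b ^ q \<Longrightarrow> a = b"
  using frob_diff[of a b] q_ge2 by simp

lemma frob_neg: "(- (a::'a)) ^ q = - (a ^ q)"
  using frob_diff[of 0 a] q_ge2 by (simp add: power_0_left)

lemma qpow_add: "qpow q (x + y) = qpow q x + qpow q (y :: 'a^'n)"
  by (simp add: qpow_def vec_eq_iff frob_add)

lemma qpow_smult: "qpow q (c *s x) = c ^ q *s qpow q (x :: 'a^'n)"
  by (simp add: qpow_def vec_eq_iff power_mult_distrib)

lemma qpow_zero: "qpow q (0::'a^'n) = 0"
  using q_ge2 by (simp add: qpow_def vec_eq_iff power_0_left)

lemma qpow_sum: "finite I \<Longrightarrow> qpow q (sum f I :: 'a^'n) = sum (\<lambda>i. qpow q (f i)) (I::'b set)"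
  by (induction I rule: finite_induct) (auto simp: qpow_zero qpow_add)

lemma qpow_mv: "qpow q ((A::'a^'n^'m) *v x) = qmat q A *v qpow q x"
  by (simp add: qpow_def qmat_def vec_eq_iff matrix_vector_mult_def frob_sum power_mult_distrib)

lemma qpow_eq0: "qpow q (x::'a^'n) = 0 \<longleftrightarrow> x = 0"
  using q_ge2 by (simp add: qpow_def vec_eq_iff)

end

locale lang = ffield F q for F :: "'a::field set" and q +
  fixes C :: "'a^'n^'n"
  assumes sepc: "\<forall>p::'a poly. degree p > 0 \<and> separable_poly p \<longrightarrow> (\<exists>x. poly p x = 0)"
    and Cinv: "\<exists>Ci. Ci ** C = mat 1"
begin

definition phi :: "'a^'n \<Rightarrow> 'a^'n" where "phi v = C *v qpow q v"

lemma phi_add: "phi (x + y) = phi x + phi y"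
  by (simp add: phi_def qpow_add matrix_vector_right_distrib)

lemma phi_smult: "phi (c *s x) = c ^ q *s phi x"
  by (simp add: phi_def qpow_smult mv_smult)

lemma phi_zero: "phi 0 = 0"
  by (simp add: phi_def qpow_zero)

lemma phi_sum: "finite I \<Longrightarrow> phi (sum f I) = sum (\<lambda>i. phi (f i)) I"
  by (induction I rule: finite_induct) (auto simp: phi_zero phi_add)

lemma C_inj: "C *v x = 0 \<Longrightarrow> x = 0"
proof -
  obtain Ci where "Ci ** C = mat 1" using Cinv by blast
  moreover assume "C *v x = 0"
  ultimately show "x = 0" by (metis matrix_vector_mul_assoc matrix_vector_mul_lid matrix_vector_mult_0_right)
qed

lemma AS: "\<exists>t::'a. t ^ q - t = c"
proof -
  let ?p = "monom (1::'a) q + [:-c, -1:]"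
  have dp: "degree ?p = q" using q_ge2
    by (subst degree_add_eq_left) (auto simp: degree_monom_eq)
  have "pderiv ?p = [:-1:]"
    by (simp add: pderiv_add pderiv_monom of_nat_q pderiv_pCons)
  then have "separable_poly ?p" unfolding separable_poly_def
    by (intro is_unit_right_imp_coprime) (simp add: is_unit_pCons_iff)
  moreover have "degree ?p > 0" using dp q_ge2 by simp
  ultimately obtain t where "poly ?p t = 0" using sepc by blast
  then show ?thesis by (intro exI[of _ t]) (simp add: poly_monom algebra_simps)
qed

lemma correct:
  assumes fin: "finite S" and fx: "\<forall>u\<in>S. phi u = u" and r: "r \<in> vec.span S"
  shows "\<exists>t\<in>vec.span S. phi t = t + r"
proof -
  obtain c where rc: "r = (\<Sum>u\<in>S. c u *s u)" using r vec.span_finite[OF fin] by auto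
  have "\<forall>u. \<exists>t. t ^ q - t = c u" using AS by blast
  then obtain t where t: "\<And>u. t u ^ q - t u = c u" by metis
  let ?t = "\<Sum>u\<in>S. t u *s u"
  have "?t \<in> vec.span S" by (simp add: vec.span_sum vec.span_scale vec.span_base)
  moreover have "phi ?t = ?t + r"
  proof -
    have "phi ?t = (\<Sum>u\<in>S. t u ^ q *s u)" using fx fin
      by (simp add: phi_sum phi_smult)
    also have "\<dots> = (\<Sum>u\<in>S. t u *s u + c u *s u)"
      by (rule sum.cong) (auto simp: t[symmetric] vector_sadd_rdistrib[symmetric])
    also have "\<dots> = ?t + r" by (simp add: sum.distrib rc)
    finally show ?thesis .
  qed
  ultimately show ?thesis by blast
qed

lemma inj_mod:
  assumes fin: "finite S" and ind: "vec.independent S" and fx: "\<forall>u\<in>S. phi u = u"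
    and pv: "phi v \<in> vec.span S"
  shows "v \<in> vec.span S"
proof (rule ccontr)
  assume nv: "v \<notin> vec.span S"
  then have ind2: "vec.independent (insert v S)" using ind vec.independent_insertI by blast
  have vS: "v \<notin> S" using nv vec.span_base by blast
  obtain i :: 'n where True by blast
  obtain g where lg: "Vector_Spaces.linear (*s) (*s) g"
     and gB: "\<forall>x\<in>insert v S. g x = (if x = v then axis i (1::'a) else 0)"
    using vec.linear_independent_extend[OF ind2, of "\<lambda>x. if x = v then axis i (1::'a) else (0::'a^'n)"] by blast
  define M where "M = matrix g"
  have Mg: "M *v x = g x" for x unfolding M_def using matrix_works[OF lg] .
  obtain c where pc: "phi v = (\<Sum>u\<in>S. c u *s u)" using pv vec.span_finite[OF fin] by auto
  have "C *v qpow q v = C *v (\<Sum>u\<in>S. c u *s qpow q u)"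
  proof -
    have "C *v qpow q v = (\<Sum>u\<in>S. c u *s phi u)" using pc fx by (simp add: phi_def)
    also have "\<dots> = C *v (\<Sum>u\<in>S. c u *s qpow q u)"
      using fin by (simp add: mv_sum mv_smult phi_def)
    finally show ?thesis .
  qed
  then have "C *v (qpow q v - (\<Sum>u\<in>S. c u *s qpow q u)) = 0"
    by (simp add: matrix_vector_mult_diff_distrib)
  then have "qpow q v - (\<Sum>u\<in>S. c u *s qpow q u) = 0" by (rule C_inj)
  then have qv: "qpow q v = (\<Sum>u\<in>S. c u *s qpow q u)" by simp
  have "qmat q M *v qpow q v = (\<Sum>u\<in>S. c u *s (qmat q M *v qpow q u))"
    using fin by (simp add: qv mv_sum mv_smult)
  also have "\<dots> = 0"
  proof (rule sum.neutral, rule ballI)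
    fix u assume "u \<in> S"
    then have "g u = 0" using gB vS by auto
    then show "c u *s (qmat q M *v qpow q u) = 0"
      by (simp add: qpow_mv[symmetric] Mg qpow_zero)
  qed
  finally have "qpow q (g v) = 0" by (simp add: qpow_mv[symmetric] Mg)
  then have "g v = 0" using qpow_eq0 by blast
  moreover have "g v = axis i 1" using gB by simp
  ultimately show False by (simp add: axis_def vec_eq_iff) (metis zero_neq_one)
qed

end

fun Xp :: "(nat \<Rightarrow> 'a::field) \<Rightarrow> nat \<Rightarrow> nat \<Rightarrow> 'a poly" where
  "Xp a q 0 = smult (a 0) (monom 1 q)"
| "Xp a q (Suc k) = Xp a q k ^ q + smult (a (Suc k)) (monom 1 q)"

lemma span_rep:
  fixes W :: "nat \<Rightarrow> 'a::field^'n"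
  assumes "x \<in> vec.span (S \<union> W ` I)" "finite I"
  shows "\<exists>s\<in>vec.span S. \<exists>a. x = s + (\<Sum>k\<in>I. a k *s W k)"
  using assms(1)
proof (induction rule: vec.span_induct_alt)
  case base
  show ?case by (intro bexI[of _ 0] exI[of _ "\<lambda>_. 0"]) (auto simp: vec.span_zero)
next
  case (step c x y)
  then obtain s a where s: "s \<in> vec.span S" and y: "y = s + (\<Sum>k\<in>I. a k *s W k)" by blast
  show ?case
  proof (cases "x \<in> S")
    case True
    then show ?thesis using s y
      by (intro bexI[of _ "c *s x + s"] exI[of _ a])
         (auto simp: vec.span_add vec.span_scale vec.span_base add.assoc)
  next
    case False
    then obtain j where j: "j \<in> I" "x = W j" using step by auto
    let ?a = "\<lambda>k. a k + (if k = j then c else 0)"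
    have "(\<Sum>k\<in>I. ?a k *s W k) = (\<Sum>k\<in>I. a k *s W k) + (\<Sum>k\<in>I. (if k = j then c else 0) *s W k)"
      by (simp add: vector_sadd_rdistrib sum.distrib)
    also have "(\<Sum>k\<in>I. (if k = j then c else 0) *s W k) = c *s W j"
      using j assms(2) by (simp add: if_distrib[of "\<lambda>t. t *s _"] sum.delta cong: if_cong)
    finally show ?thesis using s y j
      by (intro bexI[of _ s] exI[of _ ?a]) (auto simp: algebra_simps)
  qed
qed

context ffield begin

lemma Xp_pderiv: "pderiv (Xp (a::nat \<Rightarrow> 'a) q k) = 0"
  by (induction k) (simp_all add: pderiv_smult pderiv_monom pderiv_add pderiv_power of_nat_q)

lemma Xp_poly0: "poly (Xp (a::nat \<Rightarrow> 'a) q k) 0 = 0"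
  using q_ge2 by (induction k) (simp_all add: poly_monom power_0_left)

lemma Xp_nz: "(Xp (a::nat \<Rightarrow> 'a) q k = 0 \<or> q \<le> degree (Xp a q k)) \<and> ((\<exists>j\<le>k. a j \<noteq> 0) \<longrightarrow> Xp a q k \<noteq> 0)"
proof (induction k)
  case 0
  then show ?case by (auto simp: degree_monom_eq)
next
  case (Suc k)
  let ?p = "Xp a q k"
  let ?c = "a (Suc k)"
  have dm: "degree (smult ?c (monom 1 q)) \<le> q" by (simp add: degree_monom_le)
  show ?case
  proof (cases "?p = 0")
    case True
    then have e: "Xp a q (Suc k) = monom ?c q" using q_ge2 by (simp add: smult_monom power_0_left)
    have "\<forall>j\<le>k. a j = 0" using True Suc.IH by blast
    then have "(\<exists>j\<le>Suc k. a j \<noteq> 0) = (?c \<noteq> 0)" by (auto simp: le_Suc_eq)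
    then show ?thesis unfolding e by (auto simp: degree_monom_eq)
  next
    case False
    then have dp: "q \<le> degree ?p" using Suc.IH by blast
    have "degree (?p ^ q) = q * degree ?p" using False by (simp add: degree_power_eq)
    also have "\<dots> \<ge> q * q" using dp by simp
    finally have "degree (?p ^ q) \<ge> q * q" .
    moreover have "q * q > q" using q_ge2 by (metis less_le_trans mult_less_cancel2 lessI mult_1 nat_mult_1 numeral_2_eq_2 one_less_numeral_iff semiring_norm(76) zero_less_numeral le_trans)
    ultimately have lt: "degree (smult ?c (monom 1 q)) < degree (?p ^ q)" using dm by linarith
    have "degree (Xp a q (Suc k)) = degree (?p ^ q)"
      by (simp add: degree_add_eq_left[OF lt])
    then have "degree (Xp a q (Suc k)) \<ge> q" using \<open>degree (?p ^ q) \<ge> q * q\<close> \<open>q * q > q\<close> by linarith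
    then show ?thesis using q_ge2 by auto
  qed
qed

end

context lang begin

lemma Xp_root:
  assumes "\<exists>j\<le>k. (a::nat \<Rightarrow> 'a) j \<noteq> 0"
  shows "\<exists>y. y \<noteq> 0 \<and> poly (Xp a q k) y = y"
proof -
  let ?X = "Xp a q k"
  have Xnz: "?X \<noteq> 0" and dX: "q \<le> degree ?X" using Xp_nz[of a k] assms by auto
  have "[:0,1:] dvd ?X" using Xp_poly0 by (simp add: dvd_iff_poly_eq_0)
  then obtain R where XR: "?X = [:0,1:] * R" by (elim dvdE)
  define Q where "Q = R - 1"
  have "pderiv ?X = 0" by (rule Xp_pderiv)
  then have "R + [:0,1:] * pderiv R = 0" unfolding XR by (simp add: pderiv_mult pderiv_pCons)
  then have key: "Q + [:0,1:] * pderiv Q = -1" unfolding Q_def by (simp add: pderiv_diff algebra_simps)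
  have sep: "separable_poly Q" unfolding separable_poly_def
  proof (rule coprimeI)
    fix c assume "c dvd Q" "c dvd pderiv Q"
    then have "c dvd Q + [:0,1:] * pderiv Q" by (intro dvd_add dvd_mult)
    then have "c dvd -1" using key by simp
    then show "is_unit c" by simp
  qed
  have "degree R \<ge> 1"
  proof (rule ccontr)
    assume "\<not> degree R \<ge> 1"
    then have "degree ?X \<le> 1" unfolding XR using degree_mult_le[of "[:0,1:]" R] by simp
    then show False using dX q_ge2 by simp
  qed
  then have dQ: "degree Q > 0" unfolding Q_def
    using degree_add_eq_left[of "- 1" R] by simp
  obtain y where y: "poly Q y = 0" using sepc sep dQ by blast
  have "poly Q 0 = -1" using arg_cong[OF key, of "\<lambda>p. poly p 0"] by simp
  then have "y \<noteq> 0" using y by auto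
  moreover have "poly ?X y = y" unfolding XR using y by (simp add: Q_def)
  ultimately show ?thesis by blast
qed

end

context lang begin

lemma krylov_step:
  assumes fin: "finite S" and ind: "vec.independent S" and fx: "\<forall>u\<in>S. phi u = u"
    and ns: "vec.span S \<noteq> UNIV"
  shows "\<exists>x. phi x = x \<and> x \<notin> vec.span S"
proof -
  obtain w where w: "w \<notin> vec.span S" using ns by blast
  define W where "W k = (phi ^^ k) w" for k
  define T where "T N = S \<union> W ` {..<N}" for N
  have WS: "W (Suc k) = phi (W k)" for k by (simp add: W_def)
  have ex: "\<exists>N. W N \<in> vec.span (T N)"
  proof (rule ccontr)
    assume na: "\<not> (\<exists>N. W N \<in> vec.span (T N))"
    have "vec.independent (T N) \<and> finite (T N) \<and> card (T N) = card S + N" for N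
    proof (induction N)
      case 0 then show ?case using ind fin by (simp add: T_def)
    next
      case (Suc N)
      have TS: "T (Suc N) = insert (W N) (T N)" by (auto simp: T_def lessThan_Suc)
      have nsp: "W N \<notin> vec.span (T N)" using na by blast
      then have "W N \<notin> T N" using vec.span_base by blast
      then show ?case using Suc nsp unfolding TS by (simp add: vec.independent_insertI)
    qed
    then have i: "vec.independent (T (Suc CARD('n)))" and c: "card (T (Suc CARD('n))) = card S + Suc CARD('n)"
      by auto
    have "card (T (Suc CARD('n))) \<le> card (cart_basis :: ('a^'n) set)"
      using vec.independent_span_bound[OF finite_cart_basis i] by simp
    moreover have "card (cart_basis :: ('a^'n) set) = CARD('n)" by (rule card_cart_basis)
    ultimately show False using c by simp
  qed
  define d where "d = (LEAST N. W N \<in> vec.span (T N))"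
  have d1: "W d \<in> vec.span (T d)" unfolding d_def by (rule LeastI_ex[OF ex])
  have "d \<noteq> 0"
  proof
    assume "d = 0"
    then have "W 0 \<in> vec.span (T 0)" using d1 by simp
    moreover have "W 0 = w" "T 0 = S" by (simp_all add: W_def T_def)
    ultimately show False using w by simp
  qed
  then obtain m where dm: "d = Suc m" by (cases d) auto
  have "m < d" using dm by simp
  then have Wm: "W m \<notin> vec.span (T m)" unfolding d_def by (rule not_less_Least)
  have "T (Suc m) = S \<union> W ` {..<Suc m}" by (simp only: T_def)
  then have "W (Suc m) \<in> vec.span (S \<union> W ` {..<Suc m})" using d1 dm by simp
  then obtain s a where s: "s \<in> vec.span S" and Wsm: "W (Suc m) = s + (\<Sum>k<Suc m. a k *s W k)"
    using span_rep[of "W (Suc m)" S W "{..<Suc m}"] by auto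
  have SsubT: "vec.span S \<subseteq> vec.span (T m)" by (intro vec.span_mono) (auto simp: T_def)
  have nd: "\<exists>j\<le>m. a j \<noteq> 0"
  proof (rule ccontr)
    assume "\<not> (\<exists>j\<le>m. a j \<noteq> 0)"
    then have "(\<Sum>k<Suc m. a k *s W k) = 0" by (intro sum.neutral) (auto simp: less_Suc_eq_le)
    then have "phi (W m) \<in> vec.span S" using Wsm s WS by simp
    then have "W m \<in> vec.span S" using inj_mod[OF fin ind fx] by blast
    then show False using Wm SsubT by blast
  qed
  obtain y where y0: "y \<noteq> 0" and yr: "poly (Xp a q m) y = y" using Xp_root[OF nd] by blast
  define xk where "xk k = poly (Xp a q k) y" for k
  have xk0: "xk 0 = a 0 * y ^ q" by (simp add: xk_def poly_monom)
  have xkS: "xk (Suc k) = xk k ^ q + a (Suc k) * y ^ q" for k by (simp add: xk_def poly_monom)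
  have xkm: "xk m = y" using yr by (simp add: xk_def)
  define z where "z = (\<Sum>k<Suc m. xk k *s W k)"
  have "phi z = (\<Sum>k<Suc m. phi (xk k *s W k))"
    unfolding z_def by (rule phi_sum) simp
  also have "\<dots> = (\<Sum>k<Suc m. xk k ^ q *s W (Suc k))"
    by (rule sum.cong) (simp_all add: phi_smult WS)
  also have "\<dots> = (\<Sum>k<m. xk k ^ q *s W (Suc k)) + y ^ q *s W (Suc m)"
    by (simp add: xkm)
  also have "y ^ q *s W (Suc m) = y ^ q *s s + (a 0 * y ^ q) *s W 0 + (\<Sum>k<m. (a (Suc k) * y ^ q) *s W (Suc k))"
    unfolding Wsm sum.lessThan_Suc_shift
    by (simp add: vector_add_ldistrib vec.scale_sum_right vector_smult_assoc mult.commute add.assoc)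
  finally have "phi z = y ^ q *s s + ((a 0 * y ^ q) *s W 0 + ((\<Sum>k<m. xk k ^ q *s W (Suc k)) + (\<Sum>k<m. (a (Suc k) * y ^ q) *s W (Suc k))))"
    by (simp add: algebra_simps)
  also have "(\<Sum>k<m. xk k ^ q *s W (Suc k)) + (\<Sum>k<m. (a (Suc k) * y ^ q) *s W (Suc k)) = (\<Sum>k<m. xk (Suc k) *s W (Suc k))"
    by (simp add: xkS sum.distrib[symmetric] vector_sadd_rdistrib)
  also have "(a 0 * y ^ q) *s W 0 + (\<Sum>k<m. xk (Suc k) *s W (Suc k)) = z"
    unfolding z_def sum.lessThan_Suc_shift by (simp add: xk0)
  finally have pz: "phi z = z + y ^ q *s s" by (simp add: add.commute)
  have "- (y ^ q *s s) \<in> vec.span S" using s by (simp add: vec.span_neg vec.span_scale)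
  then obtain t where t: "t \<in> vec.span S" and pt: "phi t = t + - (y ^ q *s s)"
    using correct[OF fin fx] by blast
  have "phi (z + t) = z + t" using pz pt by (simp add: phi_add)
  moreover have "z + t \<notin> vec.span S"
  proof
    assume "z + t \<in> vec.span S"
    then have zS: "z \<in> vec.span S" using t vec.span_diff[of "z + t" S t] by simp
    have "y *s W m = z - (\<Sum>k<m. xk k *s W k)" unfolding z_def by (simp add: xkm)
    moreover have "(\<Sum>k<m. xk k *s W k) \<in> vec.span (T m)"
      by (intro vec.span_sum vec.span_scale vec.span_base) (auto simp: T_def)
    ultimately have "y *s W m \<in> vec.span (T m)" using zS SsubT by (simp add: vec.span_diff subsetD)
    then have "(1 / y) *s (y *s W m) \<in> vec.span (T m)" by (rule vec.span_scale)
    then have "W m \<in> vec.span (T m)" using y0 by (simp add: vector_smult_assoc)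
    then show False using Wm by blast
  qed
  ultimately show ?thesis by blast
qed

end

context lang begin

lemma lang_sets:
  "N \<le> CARD('n) \<Longrightarrow> \<exists>S. finite S \<and> card S = N \<and> vec.independent S \<and> (\<forall>u\<in>S. phi u = u)"
proof (induction N)
  case 0
  show ?case by (intro exI[of _ "{}"]) (auto simp: vec.independent_empty)
next
  case (Suc N)
  then obtain S where fin: "finite S" and cS: "card S = N" and ind: "vec.independent S"
    and fx: "\<forall>u\<in>S. phi u = u" by auto
  have ns: "vec.span S \<noteq> UNIV"
  proof
    assume "vec.span S = UNIV"
    then have "(cart_basis :: ('a^'n) set) \<subseteq> vec.span S" by simp
    then have "card (cart_basis :: ('a^'n) set) \<le> card S"
      using vec.independent_span_bound[OF fin independent_cart_basis] by simp
    moreover have "card (cart_basis :: ('a^'n) set) = CARD('n)" by (rule card_cart_basis)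
    ultimately show False using cS Suc.prems by simp
  qed
  obtain x where px: "phi x = x" and xs: "x \<notin> vec.span S" using krylov_step[OF fin ind fx ns] by blast
  have "x \<notin> S" using xs vec.span_base by blast
  then show ?case using fin cS ind fx px xs
    by (intro exI[of _ "insert x S"]) (auto simp: vec.independent_insertI)
qed

lemma lang_matrix: "\<exists>U. det U \<noteq> 0 \<and> (\<forall>j. phi (column j U) = column j U)"
proof -
  obtain S where fin: "finite S" and cS: "card S = CARD('n)" and ind: "vec.independent S"
    and fx: "\<forall>u\<in>S. phi u = u" using lang_sets[of "CARD('n)"] by auto
  obtain g where g: "bij_betw g (UNIV :: 'n set) S"
    using finite_same_card_bij[of "UNIV :: 'n set" S] fin cS by auto
  define U where "U = (\<chi> i j. g j $ i)"
  have col: "column j U = g j" for j by (simp add: U_def column_def vec_eq_iff)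
  have gS: "g j \<in> S" for j using g by (auto simp: bij_betw_def)
  have "\<forall>c. (\<Sum>i\<in>UNIV. c i *s column i U) = 0 \<longrightarrow> (\<forall>i. c i = 0)"
  proof (intro allI impI)
    fix c :: "'n \<Rightarrow> 'a" and i
    assume c: "(\<Sum>i\<in>UNIV. c i *s column i U) = 0"
    define c' where "c' u = c (inv_into UNIV g u)" for u
    have inv: "inv_into UNIV g (g j) = j" for j using g by (simp add: bij_betw_def inv_into_f_f)
    have "(\<Sum>u\<in>S. c' u *s u) = (\<Sum>j\<in>UNIV. c' (g j) *s g j)"
      using sum.reindex_bij_betw[OF g, of "\<lambda>u. c' u *s u"] by simp
    also have "\<dots> = 0" using c by (simp add: c'_def inv col)
    finally have "c' (g i) = 0" using ind gS unfolding vec.independent_explicit by blast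
    then show "c i = 0" by (simp add: c'_def inv)
  qed
  then have "det U \<noteq> 0"
    unfolding invertible_det_nz[symmetric] invertible_left_inverse
    by (simp add: matrix_left_invertible_independent_columns)
  moreover have "\<forall>j. phi (column j U) = column j U" using fx gS by (simp add: col)
  ultimately show ?thesis by blast
qed

end

lemma pair_mv: "(\<Sum>i\<in>UNIV. ((A::'a::field^'n^'m) *v x)$i * y$i) = (\<Sum>j\<in>UNIV. x$j * (\<Sum>i\<in>UNIV. A$i$j * y$i))"
  by (simp add: matrix_vector_mult_def sum_distrib_left sum_distrib_right algebra_simps sum.swap[of _ "UNIV::'m set"])

context lang begin

lemma incl:
  fixes K :: "'a set" and D :: "'a^'n^'n"
  assumes subK: "is_subfield K" and FK: "F \<subseteq> K" and DC: "D ** transpose C = mat 1"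
  shows "splitting_field K q D \<subseteq> splitting_field K q C"
proof -
  define G where "G = splitting_field K q C"
  have subG: "is_subfield G" unfolding G_def splitting_field_def by (rule gen_field_subfield)
  have KG: "K \<subseteq> G" unfolding G_def splitting_field_def using gen_field_sup by blast
  have solG: "X $ i \<in> G" if "phi X = X" for X i
  proof -
    have "X $ i \<in> K \<union> {X $ i |X i. C *v qpow q X = X}" using that unfolding phi_def by blast
    then show ?thesis unfolding G_def splitting_field_def using gen_field_sup by (rule subsetD[rotated])
  qed
  have CD: "transpose C ** D = mat 1" using DC matrix_left_right_inverse by blast
  obtain U where dU: "det U \<noteq> 0" and fU: "\<forall>j. phi (column j U) = column j U" using lang_matrix by blast
  have "Y $ k \<in> G" if Y: "D *v qpow q Y = Y" for Y k
  proof -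
    define c where "c = (\<chi> j. \<Sum>i\<in>UNIV. U$i$j * Y$i)"
    have cF: "c $ j \<in> F" for j
    proof (rule roots_in_F)
      define g where "g = column j U"
      have g: "C *v qpow q g = g" using fU by (simp add: g_def phi_def)
      have cj: "c $ j = (\<Sum>i\<in>UNIV. g$i * Y$i)" by (simp add: c_def g_def column_def)
      also have "\<dots> = (\<Sum>i\<in>UNIV. (C *v qpow q g)$i * Y$i)" using g by simp
      also have "\<dots> = (\<Sum>j\<in>UNIV. qpow q g $ j * (\<Sum>i\<in>UNIV. C$i$j * Y$i))" by (rule pair_mv)
      also have "(\<lambda>j. (\<Sum>i\<in>UNIV. C$i$j * Y$i)) = (\<lambda>j. ((transpose C ** D) *v qpow q Y) $ j)"
      proof
        fix j
        have "(\<Sum>i\<in>UNIV. C$i$j * Y$i) = (\<Sum>i\<in>UNIV. C$i$j * (D *v qpow q Y)$i)" using Y by simp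
        also have "\<dots> = (transpose C *v (D *v qpow q Y)) $ j"
          unfolding matrix_vector_mult_def[of "transpose C"] by (simp add: transpose_def mult.commute del: transpose_matrix_vector)
        also have "\<dots> = ((transpose C ** D) *v qpow q Y) $ j"
          by (simp only: matrix_vector_mul_assoc)
        finally show "(\<Sum>i\<in>UNIV. C$i$j * Y$i) = ((transpose C ** D) *v qpow q Y) $ j" .
      qed
      also have "(\<Sum>j\<in>UNIV. qpow q g $ j * ((transpose C ** D) *v qpow q Y) $ j) = (\<Sum>j\<in>UNIV. g$j ^ q * Y$j ^ q)"
        by (simp add: CD qpow_def)
      also have "\<dots> = (c $ j) ^ q" unfolding cj by (simp add: frob_sum power_mult_distrib)
      finally show "(c $ j) ^ q = c $ j" by simp
    qed
    have UY: "transpose U *v Y = c"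
      by (simp add: c_def vec_eq_iff matrix_vector_mult_def transpose_def del: transpose_matrix_vector)
    have dT: "det (transpose U) \<noteq> 0" using dU by simp
    have "Y = (\<chi> k. det(\<chi> i j. if j=k then c$i else transpose U$i$j) / det (transpose U))"
      using cramer[OF dT] UY by blast
    then have Yk: "Y $ k = det(\<chi> i j. if j=k then c$i else transpose U$i$j) / det (transpose U)" by simp
    have UG: "U $ i $ j \<in> G" for i j
    proof -
      have "column j U $ i \<in> G" using solG fU by blast
      then show ?thesis by (simp add: column_def)
    qed
    have "det (transpose U) \<in> G" using UG subG by (intro subfield_det) (auto simp: transpose_def)
    moreover have "det(\<chi> i j. if j=k then c$i else transpose U$i$j) \<in> G"
    proof (rule subfield_det[OF subG], intro allI)
      fix i j
      have "c $ i \<in> G" using cF FK KG by blast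
      then show "(\<chi> i j. if j=k then c$i else transpose U$i$j) $ i $ j \<in> G"
        using UG by (simp add: transpose_def)
    qed
    ultimately show ?thesis unfolding Yk using subG subfield_div by blast
  qed
  then have "K \<union> {Y $ i |Y i. D *v qpow q Y = Y} \<subseteq> G" using KG by blast
  then show ?thesis unfolding G_def splitting_field_def[of K q D]
    by (intro gen_field_min[OF subG[unfolded G_def]]) (simp add: splitting_field_def)
qed

end

theorem proposition4p3:
  fixes K :: "'a::field set" and q :: nat and B :: "'a ^ 'n ^ 'n"
  assumes "is_separable_closure_of K"
    and "\<exists>F. is_subfield F \<and> F \<subseteq> K \<and> finite F \<and> card F = q"
    and "\<forall>i j. B $ i $ j \<in> K"
    and "invertible B"
  shows "splitting_field K q B = splitting_field K q (transpose (matrix_inv B))"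
proof -
  obtain F where F: "is_subfield F" "F \<subseteq> K" "finite F" "card F = q" using assms(2) by blast
  have subK: "is_subfield K" and sepc: "\<forall>p::'a poly. degree p > 0 \<and> separable_poly p \<longrightarrow> (\<exists>x. poly p x = 0)"
    using assms(1) unfolding is_separable_closure_of_def by blast+
  define B' where "B' = transpose (matrix_inv B)"
  have BI: "B ** matrix_inv B = mat 1" "matrix_inv B ** B = mat 1"
    using assms(4) unfolding invertible_def matrix_inv_def by (metis (mono_tags, lifting) someI_ex)+
  have l1: "lang F q B" unfolding lang_def lang_axioms_def ffield_def using F sepc BI by blast
  have l2: "lang F q B'" unfolding lang_def lang_axioms_def ffield_def B'_def using F sepc BI
    by (metis matrix_transpose_mul transpose_mat)
  have d1: "B' ** transpose B = mat 1" unfolding B'_def using BI by (metis matrix_transpose_mul transpose_mat)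
  have d2: "B ** transpose B' = mat 1" unfolding B'_def using BI by simp
  show ?thesis unfolding B'_def[symmetric]
    using lang.incl[OF l1 subK F(2) d1] lang.incl[OF l2 subK F(2) d2] by blast
qed

end
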